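(* Let $n\ge1$, $\rho\in\mathbb{R}$ with $n+2-n\rho\neq 0$, and let $H_n$ be the $(2n+1)$-dimensional Heisenberg group with Lie algebra $\mathfrak{h}_n$ spanned by $e_1,\dots,e_{2n+1}$, whose only nonzero brackets are $[e_i,e_{n+i}]=e_{2n+1}$ ($1\le i\le n$). Let $g_0$ be a left-invariant metric, diagonal in this basis, with $g_I(0)=g_0(e_I,e_I)$, satisfying $g_{2n+1}(0)=g_i(0)g_{n+i}(0)$ for all $1\le i\le n$. Let $g(t)$ be the diagonal left-invariant metric with $g_j(t)=g_j(0)(1+bt)^{\frac{1-n\rho}{n+2-n\rho}}$ ($1\le j\le 2n$), $g_{2n+1}(t)=g_{2n+1}(0)(1+bt)^{\frac{n+n\rho}{n\rho-n-2}}$, $b=(n+2-n\rho)\frac{g_{2n+1}(0)}{g_1(0)g_{1+n}(0)}$, which is the solution of the Ricci–Bourguignon flow $\partial_t g=-2\mathrm{Ric}+2\rho Rg$ starting at $g_0$. Then $(H_n,g_0)$ is of Heisenberg type, but the Heisenberg type property is not preserved along $g(t)$: for $t\neq 0$ (with $1+bt>0$), $(\mathfrak{h}_n,g(t))$ is not of Heisenberg type.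
   Context: For a 2-step nilpotent Lie algebra $\mathcal{N}$ with inner product $\langle\cdot,\cdot\rangle$, let $\mathcal{Z}$ be its center and $\mathcal{V}$ the orthogonal complement of $\mathcal{Z}$. For $Z\in\mathcal{Z}$ define the skew-symmetric map $j(Z):\mathcal{V}\to\mathcal{V}$ by $\langle j(Z)X,Y\rangle=\langle Z,[X,Y]\rangle$ for all $X,Y\in\mathcal{V}$. $(\mathcal{N},\langle\cdot,\cdot\rangle)$ is of Heisenberg type if $j(Z)^2=-|Z|^2\,\mathrm{Id}$ for all $Z\in\mathcal{Z}$. Here $\mathcal{Z}=\mathrm{span}\{e_{2n+1}\}$ and, for diagonal metrics, $\mathcal{V}=\mathrm{span}\{e_1,\dots,e_{2n}\}$; $j$ and norms are taken with respect to $g(t)$ at time $t$. *)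

theory Defs
  imports Complex_Main
begin

text \<open>The Heisenberg Lie algebra h_n is modelled as R^(2n+1): vectors are functions
  nat => real supported on the index set {1..2n+1} (components w.r.t. the basis
  e_1,...,e_(2n+1)).\<close>

definition heis_carrier :: "nat \<Rightarrow> (nat \<Rightarrow> real) set" where
  "heis_carrier n = {X. \<forall>k. k \<notin> {1..2*n+1} \<longrightarrow> X k = 0}"

text \<open>Lie bracket: the only nonzero brackets of basis vectors are [e_i, e_(n+i)] = e_(2n+1).\<close>
definition heis_bracket :: "nat \<Rightarrow> (nat \<Rightarrow> real) \<Rightarrow> (nat \<Rightarrow> real) \<Rightarrow> (nat \<Rightarrow> real)" where
  "heis_bracket n X Y = (\<lambda>k. if k = 2*n+1
      then (\<Sum>i=1..n. X i * Y (n+i) - X (n+i) * Y i) else 0)"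

definition diag_inner :: "nat \<Rightarrow> (nat \<Rightarrow> real) \<Rightarrow> (nat \<Rightarrow> real) \<Rightarrow> (nat \<Rightarrow> real) \<Rightarrow> real" where
  "diag_inner n g X Y = (\<Sum>k=1..2*n+1. g k * X k * Y k)"

definition lie_center :: "'v set \<Rightarrow> ('v \<Rightarrow> 'v \<Rightarrow> 'v) \<Rightarrow> 'v \<Rightarrow> 'v set" where
  "lie_center C br zero = {Z \<in> C. \<forall>X\<in>C. br Z X = zero}"

definition center_compl :: "'v set \<Rightarrow> ('v \<Rightarrow> 'v \<Rightarrow> 'v) \<Rightarrow> 'v \<Rightarrow> ('v \<Rightarrow> 'v \<Rightarrow> real) \<Rightarrow> 'v set" where
  "center_compl C br zero ip = {X \<in> C. \<forall>Z\<in>lie_center C br zero. ip X Z = 0}"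

definition j_map :: "'v set \<Rightarrow> ('v \<Rightarrow> 'v \<Rightarrow> 'v) \<Rightarrow> 'v \<Rightarrow> ('v \<Rightarrow> 'v \<Rightarrow> real) \<Rightarrow> 'v \<Rightarrow> 'v \<Rightarrow> 'v" where
  "j_map C br zero ip Z X = (THE W. W \<in> center_compl C br zero ip \<and>
      (\<forall>Y\<in>center_compl C br zero ip. ip W Y = ip Z (br X Y)))"

definition is_H_type :: "'v set \<Rightarrow> ('v \<Rightarrow> 'v \<Rightarrow> 'v) \<Rightarrow> 'v \<Rightarrow> ('v \<Rightarrow> 'v \<Rightarrow> real)
    \<Rightarrow> ('v \<Rightarrow> 'v) \<Rightarrow> ('v \<Rightarrow> real \<Rightarrow> 'v) \<Rightarrow> bool" where
  "is_H_type C br zero ip neg scale \<longleftrightarrow>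
     (\<forall>Z\<in>lie_center C br zero. \<forall>X\<in>center_compl C br zero ip.
        j_map C br zero ip Z (j_map C br zero ip Z X) = neg (scale X (ip Z Z)))"

definition heis_H_type :: "nat \<Rightarrow> (nat \<Rightarrow> real) \<Rightarrow> bool" where
  "heis_H_type n g = is_H_type (heis_carrier n) (heis_bracket n) (\<lambda>_. 0) (diag_inner n g)
      (\<lambda>X. \<lambda>k. - X k) (\<lambda>X c. \<lambda>k. c * X k)"

end

theory Submission
  imports Defs
begin

lemma sum_split:
  fixes f :: "nat \<Rightarrow> real"
  shows "sum f {1..2*n+1} = (\<Sum>i=1..n. f i + f (n+i)) + f (2*n+1)"
proof -
  have "sum f {1..2*n+1} = sum f {1..2*n} + f (2*n+1)"
    by (simp add: sum.cl_ivl_Suc)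
  moreover have "sum f {1..n+n} = sum f {1..n} + sum f {n+1..n+n}"
    by (rule sum.ub_add_nat) simp
  moreover have "sum f {1+n..n+n} = (\<Sum>i=1..n. f (i+n))"
    by (rule sum.shift_bounds_cl_nat_ivl)
  ultimately show ?thesis
    by (simp add: sum.distrib mult_2 add.commute)
qed

lemma ip_center1:
  fixes X Z g :: "nat \<Rightarrow> real"
  assumes "\<forall>k. k \<noteq> 2*n+1 \<longrightarrow> Z k = 0"
  shows "diag_inner n g X Z = g (2*n+1) * X (2*n+1) * Z (2*n+1)"
proof -
  have "(\<Sum>i=1..n. g i * X i * Z i + g (n+i) * X (n+i) * Z (n+i)) = 0"
    by (rule sum.neutral) (use assms in auto)
  then show ?thesis unfolding diag_inner_def sum_split[of _ n] by simp
qed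

lemma ip_center2:
  fixes X Z g :: "nat \<Rightarrow> real"
  assumes "\<forall>k. k \<noteq> 2*n+1 \<longrightarrow> Z k = 0"
  shows "diag_inner n g Z X = g (2*n+1) * Z (2*n+1) * X (2*n+1)"
  using ip_center1[OF assms, of g X] unfolding diag_inner_def by (simp add: ac_simps)

lemma center_eq:
  fixes n :: nat
  assumes "n \<ge> 1"
  shows "lie_center (heis_carrier n) (heis_bracket n) (\<lambda>_. 0) = {Z. \<forall>k. k \<noteq> 2*n+1 \<longrightarrow> Z k = 0}"
proof (intro equalityI subsetI)
  fix Z assume Z: "Z \<in> lie_center (heis_carrier n) (heis_bracket n) (\<lambda>_. 0)"
  then have ZC: "Z \<in> heis_carrier n" and br: "\<And>X. X \<in> heis_carrier n \<Longrightarrow> heis_bracket n Z X = (\<lambda>_. 0)"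
    unfolding lie_center_def by auto
  show "Z \<in> {Z. \<forall>k. k \<noteq> 2*n+1 \<longrightarrow> Z k = 0}"
  proof (intro CollectI allI impI)
    fix k assume k: "k \<noteq> 2*n+1"
    consider "k \<notin> {1..2*n+1}" | "k \<in> {1..n}" | "k \<in> {n+1..2*n}" using k by force
    then show "Z k = 0"
    proof cases
      case 1 then show ?thesis using ZC unfolding heis_carrier_def by auto
    next
      case 2
      define X where "X = (\<lambda>j. if j = n+k then 1 else (0::real))"
      have XC: "X \<in> heis_carrier n" using 2 unfolding X_def heis_carrier_def by auto
      have "heis_bracket n Z X (2*n+1) = 0" using br[OF XC] by simp
      then have "(\<Sum>i=1..n. Z i * X (n+i) - Z (n+i) * X i) = 0" unfolding heis_bracket_def by simp
      moreover have "(\<Sum>i=1..n. Z i * X (n+i) - Z (n+i) * X i) = (\<Sum>i=1..n. if i = k then Z i else 0)"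
        by (rule sum.cong) (use 2 in \<open>auto simp: X_def\<close>)
      ultimately show ?thesis using 2 by simp
    next
      case 3
      define X where "X = (\<lambda>j. if j = k-n then 1 else (0::real))"
      have XC: "X \<in> heis_carrier n" using 3 unfolding X_def heis_carrier_def by auto
      have "heis_bracket n Z X (2*n+1) = 0" using br[OF XC] by simp
      then have "(\<Sum>i=1..n. Z i * X (n+i) - Z (n+i) * X i) = 0" unfolding heis_bracket_def by simp
      moreover have "(\<Sum>i=1..n. Z i * X (n+i) - Z (n+i) * X i) = (\<Sum>i=1..n. if i = k-n then - Z (n+i) else 0)"
        by (rule sum.cong) (use 3 in \<open>auto simp: X_def\<close>)
      moreover have "n + (k - n) = k" using 3 by simp
      ultimately show ?thesis using 3 by (simp split: if_splits)
    qed
  qed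
next
  fix Z :: "nat \<Rightarrow> real" assume Z: "Z \<in> {Z. \<forall>k. k \<noteq> 2*n+1 \<longrightarrow> Z k = 0}"
  have "Z \<in> heis_carrier n" using Z unfolding heis_carrier_def by auto
  moreover have "heis_bracket n Z X = (\<lambda>_. 0)" for X :: "nat \<Rightarrow> real"
  proof -
    have "(\<Sum>i=1..n. Z i * X (n+i) - Z (n+i) * X i) = 0"
      by (rule sum.neutral) (use Z in auto)
    then show ?thesis unfolding heis_bracket_def by auto
  qed
  ultimately show "Z \<in> lie_center (heis_carrier n) (heis_bracket n) (\<lambda>_. 0)"
    unfolding lie_center_def by auto
qed

lemma compl_eq:
  fixes g :: "nat \<Rightarrow> real"
  assumes "n \<ge> 1" and gp: "g (2*n+1) > 0"
  shows "center_compl (heis_carrier n) (heis_bracket n) (\<lambda>_. 0) (diag_inner n g)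
         = {X. \<forall>k. k \<notin> {1..2*n} \<longrightarrow> X k = 0}"
proof (intro equalityI subsetI)
  fix X assume X: "X \<in> center_compl (heis_carrier n) (heis_bracket n) (\<lambda>_. 0) (diag_inner n g)"
  define E where "E = (\<lambda>j. if j = 2*n+1 then 1 else (0::real))"
  have "E \<in> lie_center (heis_carrier n) (heis_bracket n) (\<lambda>_. 0)"
    using center_eq[OF assms(1)] unfolding E_def by auto
  then have "diag_inner n g X E = 0" using X unfolding center_compl_def by auto
  moreover have "diag_inner n g X E = g (2*n+1) * X (2*n+1)"
    by (subst ip_center1) (auto simp: E_def)
  ultimately have "X (2*n+1) = 0" using gp by simp
  moreover have "X \<in> heis_carrier n" using X unfolding center_compl_def by auto
  ultimately show "X \<in> {X. \<forall>k. k \<notin> {1..2*n} \<longrightarrow> X k = 0}"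
    unfolding heis_carrier_def by auto (metis atLeastAtMost_iff le_Suc_eq mult_2 add_Suc_right add_0_right)
next
  fix X :: "nat \<Rightarrow> real" assume X: "X \<in> {X. \<forall>k. k \<notin> {1..2*n} \<longrightarrow> X k = 0}"
  have "X \<in> heis_carrier n" using X unfolding heis_carrier_def by auto
  moreover have "diag_inner n g X Z = 0" if "Z \<in> lie_center (heis_carrier n) (heis_bracket n) (\<lambda>_. 0)" for Z
    using that X by (subst ip_center1) (auto simp: center_eq[OF assms(1)])
  ultimately show "X \<in> center_compl (heis_carrier n) (heis_bracket n) (\<lambda>_. 0) (diag_inner n g)"
    unfolding center_compl_def by auto
qed

definition Jf :: "nat \<Rightarrow> (nat \<Rightarrow> real) \<Rightarrow> (nat \<Rightarrow> real) \<Rightarrow> (nat \<Rightarrow> real) \<Rightarrow> (nat \<Rightarrow> real)" where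
  "Jf n g Z X = (\<lambda>k. if k \<in> {1..n} then -(g (2*n+1) * Z (2*n+1) * X (n+k)) / g k
     else if k \<in> {n+1..2*n} then g (2*n+1) * Z (2*n+1) * X (k-n) / g k else 0)"

lemma j_eq:
  fixes g Z X :: "nat \<Rightarrow> real"
  assumes n1: "n \<ge> 1" and gp: "\<And>k. k \<in> {1..2*n+1} \<Longrightarrow> g k > 0"
    and Z: "\<forall>k. k \<noteq> 2*n+1 \<longrightarrow> Z k = 0"
  shows "j_map (heis_carrier n) (heis_bracket n) (\<lambda>_. 0) (diag_inner n g) Z X = Jf n g Z X"
proof -
  have gt: "g (2*n+1) > 0" using gp by simp
  note V = compl_eq[of n g, OF n1 gt]
  have key: "diag_inner n g (Jf n g Z X) Y = diag_inner n g Z (heis_bracket n X Y)"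
    if Y: "\<forall>k. k \<notin> {1..2*n} \<longrightarrow> Y k = 0" for Y
  proof -
    have "diag_inner n g Z (heis_bracket n X Y) = g (2*n+1) * Z (2*n+1) *
       (\<Sum>i=1..n. X i * Y (n+i) - X (n+i) * Y i)"
      by (subst ip_center2[OF Z]) (simp add: heis_bracket_def)
    also have "\<dots> = (\<Sum>i=1..n. g (2*n+1) * Z (2*n+1) * (X i * Y (n+i) - X (n+i) * Y i))"
      by (simp add: sum_distrib_left)
    also have "\<dots> = (\<Sum>i=1..n. g i * Jf n g Z X i * Y i + g (n+i) * Jf n g Z X (n+i) * Y (n+i))"
    proof (rule sum.cong)
      fix i assume i: "i \<in> {1..n}"
      have g1: "g i > 0" using gp i by auto
      have g2: "g (n+i) > 0" using gp i by auto
      have "Jf n g Z X i = -(g (2*n+1) * Z (2*n+1) * X (n+i)) / g i" using i by (simp add: Jf_def)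
      moreover have "Jf n g Z X (n+i) = g (2*n+1) * Z (2*n+1) * X i / g (n+i)" using i by (simp add: Jf_def)
      ultimately show "g (2*n+1) * Z (2*n+1) * (X i * Y (n+i) - X (n+i) * Y i) =
         g i * Jf n g Z X i * Y i + g (n+i) * Jf n g Z X (n+i) * Y (n+i)"
        using g1 g2 by (simp add: field_simps)
    qed simp
    also have "\<dots> = diag_inner n g (Jf n g Z X) Y"
      unfolding diag_inner_def sum_split[of _ n] by (simp add: Jf_def)
    finally show ?thesis by simp
  qed
  show ?thesis
    unfolding j_map_def
  proof (rule the_equality)
    show "Jf n g Z X \<in> center_compl (heis_carrier n) (heis_bracket n) (\<lambda>_. 0) (diag_inner n g) \<and>
      (\<forall>Y\<in>center_compl (heis_carrier n) (heis_bracket n) (\<lambda>_. 0) (diag_inner n g).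
          diag_inner n g (Jf n g Z X) Y = diag_inner n g Z (heis_bracket n X Y))"
      unfolding V using key by (auto simp: Jf_def)
  next
    fix W assume W: "W \<in> center_compl (heis_carrier n) (heis_bracket n) (\<lambda>_. 0) (diag_inner n g) \<and>
      (\<forall>Y\<in>center_compl (heis_carrier n) (heis_bracket n) (\<lambda>_. 0) (diag_inner n g).
          diag_inner n g W Y = diag_inner n g Z (heis_bracket n X Y))"
    define D where "D = (\<lambda>k. W k - Jf n g Z X k)"
    have WV: "\<forall>k. k \<notin> {1..2*n} \<longrightarrow> W k = 0" using W unfolding V by auto
    have DV: "\<forall>k. k \<notin> {1..2*n} \<longrightarrow> D k = 0" using WV by (auto simp: D_def Jf_def)
    have "diag_inner n g W D = diag_inner n g Z (heis_bracket n X D)"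
      using W DV unfolding V by auto
    also have "\<dots> = diag_inner n g (Jf n g Z X) D" using key[OF DV] by simp
    finally have "diag_inner n g W D - diag_inner n g (Jf n g Z X) D = 0" by simp
    then have S: "(\<Sum>k=1..2*n+1. g k * D k * D k) = 0"
    proof -
      have "diag_inner n g W D - diag_inner n g (Jf n g Z X) D
         = (\<Sum>k=1..2*n+1. g k * W k * D k - g k * Jf n g Z X k * D k)"
        unfolding diag_inner_def by (rule sum_subtractf[symmetric])
      also have "\<dots> = (\<Sum>k=1..2*n+1. g k * D k * D k)"
        by (rule sum.cong) (simp_all add: D_def algebra_simps)
      finally show ?thesis using \<open>diag_inner n g W D - diag_inner n g (Jf n g Z X) D = 0\<close> by simp
    qed
    have nn: "0 \<le> g k * D k * D k" if "k \<in> {1..2*n+1}" for k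
    proof -
      have "0 \<le> g k" using gp[OF that] by linarith
      moreover have "0 \<le> D k * D k" by (rule zero_le_square)
      ultimately show ?thesis by (metis mult.assoc mult_nonneg_nonneg)
    qed
    have "\<forall>k\<in>{1..2*n+1}. g k * D k * D k = 0"
      using sum_nonneg_eq_0_iff[of "{1..2*n+1}" "\<lambda>k. g k * D k * D k"] S nn by simp
    then have D0: "D k = 0" if "k \<in> {1..2*n+1}" for k
    proof -
      have "g k * D k * D k = 0" using \<open>\<forall>k\<in>{1..2*n+1}. g k * D k * D k = 0\<close> that by blast
      then show ?thesis using gp[OF that] by simp
    qed
    show "W = Jf n g Z X"
    proof
      fix k
      show "W k = Jf n g Z X k"
      proof (cases "k \<in> {1..2*n+1}")
        case True then show ?thesis using D0[OF True] by (simp add: D_def)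
      next
        case False
        then have "W k = 0" using WV by auto
        moreover have "Jf n g Z X k = 0" using False by (auto simp: Jf_def)
        ultimately show ?thesis by simp
      qed
    qed
  qed
qed

lemma Jf_V: "\<forall>k. k \<notin> {1..2*n} \<longrightarrow> Jf n g Z X k = 0"
  by (auto simp: Jf_def)

lemma htype_suff:
  fixes g :: "nat \<Rightarrow> real"
  assumes n1: "n \<ge> 1" and gp: "\<And>k. k \<in> {1..2*n+1} \<Longrightarrow> g k > 0"
    and comp: "\<And>i. i \<in> {1..n} \<Longrightarrow> g (2*n+1) = g i * g (n+i)"
  shows "heis_H_type n g"
  unfolding heis_H_type_def is_H_type_def
proof (intro ballI)
  have gt: "g (2*n+1) > 0" using gp by simp
  note V = compl_eq[of n g, OF n1 gt]
  fix Z X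
  assume Zc: "Z \<in> lie_center (heis_carrier n) (heis_bracket n) (\<lambda>_. 0)"
    and XV: "X \<in> center_compl (heis_carrier n) (heis_bracket n) (\<lambda>_. 0) (diag_inner n g)"
  have Z: "\<forall>k. k \<noteq> 2*n+1 \<longrightarrow> Z k = 0" using Zc center_eq[OF n1] by auto
  have X: "\<forall>k. k \<notin> {1..2*n} \<longrightarrow> X k = 0" using XV V by auto
  have ZZ: "diag_inner n g Z Z = g (2*n+1) * Z (2*n+1) * Z (2*n+1)" by (rule ip_center1[OF Z])
  define c where "c = g (2*n+1)"
  define z where "z = Z (2*n+1)"
  have JJ: "j_map (heis_carrier n) (heis_bracket n) (\<lambda>_. 0) (diag_inner n g) Z
          (j_map (heis_carrier n) (heis_bracket n) (\<lambda>_. 0) (diag_inner n g) Z X) =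
        Jf n g Z (Jf n g Z X)" by (simp only: j_eq[OF n1 gp Z])
  have "Jf n g Z (Jf n g Z X) = (\<lambda>k. - (g (2*n+1) * Z (2*n+1) * Z (2*n+1) * X k))"
  proof
    fix k
    consider "k \<in> {1..n}" | "k \<in> {n+1..2*n}" | "k \<notin> {1..2*n}" by force
    then show "Jf n g Z (Jf n g Z X) k = - (g (2*n+1) * Z (2*n+1) * Z (2*n+1) * X k)"
    proof cases
      case 1
      have g1: "g k > 0" using gp 1 by auto
      have g2: "g (n+k) > 0" using gp 1 by auto
      have "Jf n g Z (Jf n g Z X) k = -(c * z * (c * z * X k / g (n+k))) / g k"
        using 1 by (simp add: Jf_def c_def z_def)
      also have "\<dots> = - (c * z * z * X k)"
      proof -
        have "g (n+k) * g k = c" using comp[OF 1] by (simp add: c_def)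
        then show ?thesis using g1 g2 by (simp add: divide_simps)
      qed
      finally show ?thesis by (simp add: c_def z_def)
    next
      case 2
      define i where "i = k - n"
      have i: "i \<in> {1..n}" "k = n + i" using 2 by (auto simp: i_def)
      have g1: "g i > 0" using gp i by auto
      have g2: "g (n+i) > 0" using gp i by auto
      have "Jf n g Z (Jf n g Z X) k = c * z * (-(c * z * X (n+i)) / g i) / g (n+i)"
        using i by (simp add: Jf_def c_def z_def)
      also have "\<dots> = - (c * z * z * X (n+i))"
      proof -
        have "g i * g (n+i) = c" using comp[OF i(1)] by (simp add: c_def)
        then show ?thesis using g1 g2 by (simp add: divide_simps)
      qed
      finally show ?thesis using i by (simp add: c_def z_def)
    next
      case 3
      have "Jf n g Z (Jf n g Z X) k = 0" using Jf_V 3 by blast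
      moreover have "X k = 0" using X 3 by blast
      ultimately show ?thesis by simp
    qed
  qed
  then show "j_map (heis_carrier n) (heis_bracket n) (\<lambda>_. 0) (diag_inner n g) Z
          (j_map (heis_carrier n) (heis_bracket n) (\<lambda>_. 0) (diag_inner n g) Z X) =
        (\<lambda>k. - (diag_inner n g Z Z * X k))" using JJ ZZ by simp
qed

lemma htype_nec:
  fixes g :: "nat \<Rightarrow> real"
  assumes n1: "n \<ge> 1" and gp: "\<And>k. k \<in> {1..2*n+1} \<Longrightarrow> g k > 0"
    and H: "heis_H_type n g"
  shows "g (2*n+1) = g 1 * g (n+1)"
proof -
  have gt: "g (2*n+1) > 0" using gp by simp
  note V = compl_eq[of n g, OF n1 gt]
  define Z where "Z = (\<lambda>j. if j = 2*n+1 then 1 else (0::real))"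
  define X where "X = (\<lambda>j::nat. if j = 1 then 1 else (0::real))"
  have Z: "\<forall>k. k \<noteq> 2*n+1 \<longrightarrow> Z k = 0" by (simp add: Z_def)
  have Zc: "Z \<in> lie_center (heis_carrier n) (heis_bracket n) (\<lambda>_. 0)"
    using center_eq[OF n1] Z by auto
  have XV: "X \<in> center_compl (heis_carrier n) (heis_bracket n) (\<lambda>_. 0) (diag_inner n g)"
    using V n1 by (auto simp: X_def)
  have "j_map (heis_carrier n) (heis_bracket n) (\<lambda>_. 0) (diag_inner n g) Z
          (j_map (heis_carrier n) (heis_bracket n) (\<lambda>_. 0) (diag_inner n g) Z X) =
        (\<lambda>k. - (diag_inner n g Z Z * X k))"
    using H Zc XV unfolding heis_H_type_def is_H_type_def by blast
  then have "Jf n g Z (Jf n g Z X) = (\<lambda>k. - (diag_inner n g Z Z * X k))"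
    by (simp only: j_eq[OF n1 gp Z])
  then have E: "Jf n g Z (Jf n g Z X) 1 = - (diag_inner n g Z Z * X 1)"
    by (rule fun_cong)
  have ZZ: "diag_inner n g Z Z = g (2*n+1)" by (subst ip_center1[OF Z]) (simp add: Z_def)
  have g1: "g 1 > 0" using gp n1 by auto
  have g2: "g (n+1) > 0" using gp n1 by auto
  have "Jf n g Z (Jf n g Z X) 1 = -(g (2*n+1) * (g (2*n+1) / g (n+1))) / g 1"
    using n1 by (simp add: Jf_def Z_def X_def add.commute)
  with E ZZ have "g (2*n+1) * (g (2*n+1) / g (n+1)) / g 1 = g (2*n+1)" by (simp add: X_def)
  then have "g (2*n+1) * g (2*n+1) = g (2*n+1) * (g 1 * g (n+1))"
    using g1 g2 by (simp add: field_simps)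
  then show ?thesis using gt by simp
qed

theorem proposition2p5:
  fixes n :: nat and \<rho> :: real and g0 :: "nat \<Rightarrow> real"
  assumes n_ge: "n \<ge> 1"
    and rho: "real n + 2 - real n * \<rho> \<noteq> 0"
    and pos: "\<And>k. k \<in> {1..2*n+1} \<Longrightarrow> g0 k > 0"
    and comp: "\<And>i. i \<in> {1..n} \<Longrightarrow> g0 (2*n+1) = g0 i * g0 (n+i)"
  defines "b \<equiv> (real n + 2 - real n * \<rho>) * g0 (2*n+1) / (g0 1 * g0 (1+n))"
  defines "g \<equiv> (\<lambda>t::real. \<lambda>k::nat.
      if k = 2*n+1 then g0 k * (1 + b*t) powr ((real n + real n * \<rho>) / (real n * \<rho> - real n - 2))
      else g0 k * (1 + b*t) powr ((1 - real n * \<rho>) / (real n + 2 - real n * \<rho>)))"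
  shows "heis_H_type n g0 \<and>
         (\<forall>t::real. t \<noteq> 0 \<and> 1 + b*t > 0 \<longrightarrow> \<not> heis_H_type n (g t))"
proof -
  have H0: "heis_H_type n g0" by (rule htype_suff[OF n_ge pos comp])
  moreover have "\<not> heis_H_type n (g t)" if t: "t \<noteq> 0" "1 + b*t > 0" for t
  proof
    assume H: "heis_H_type n (g t)"
    define s where "s = 1 + b*t"
    define a where "a = (real n + real n * \<rho>) / (real n * \<rho> - real n - 2)"
    define e where "e = (1 - real n * \<rho>) / (real n + 2 - real n * \<rho>)"
    have s0: "s > 0" using t by (simp add: s_def)
    have g01: "g0 1 > 0" using pos n_ge by auto
    have g02: "g0 (1+n) > 0" using pos n_ge by auto
    have g03: "g0 (2*n+1) > 0" using pos by auto
    have "b \<noteq> 0" unfolding b_def using rho g01 g02 g03 by simp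
    then have s1: "s \<noteq> 1" using t by (simp add: s_def)
    have gt: "g t k = (if k = 2*n+1 then g0 k * s powr a else g0 k * s powr e)" for k
      by (simp add: g_def s_def a_def e_def)
    have gpos: "g t k > 0" if "k \<in> {1..2*n+1}" for k
      using pos[OF that] s0 unfolding gt by auto
    have "g t (2*n+1) = g t 1 * g t (n+1)" by (rule htype_nec[OF n_ge gpos H])
    moreover have "1 \<noteq> 2*n+1" "n+1 \<noteq> 2*n+1" using n_ge by auto
    ultimately have "g0 (2*n+1) * s powr a = (g0 1 * g0 (n+1)) * (s powr e * s powr e)"
      by (simp add: gt algebra_simps)
    also have "g0 1 * g0 (n+1) = g0 (2*n+1)" using comp[of 1] n_ge by (simp add: add.commute)
    also have "s powr e * s powr e = s powr (e + e)" by (rule powr_add[symmetric])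
    finally have "s powr a = s powr (e + e)" using g03 by simp
    then have ae: "a = e + e" using powr_inj[OF s0 s1] by simp
    have D: "real n * \<rho> - real n - 2 = - (real n + 2 - real n * \<rho>)" by simp
    have "a = - (real n + real n * \<rho>) / (real n + 2 - real n * \<rho>)"
      unfolding a_def D by (simp only: divide_minus_right minus_divide_left)
    with ae have "- (real n + real n * \<rho>) = 2 * (1 - real n * \<rho>)"
      using rho by (simp add: e_def field_simps)
    then show False using rho by (simp add: algebra_simps)
  qed
  ultimately show ?thesis by blast
qed

end
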